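(* Let $A,B\in\mathscr{B}(\Omega)$ with $\underline{P}(B)>0$ and $\underline{P}(B^c)>0$, and let $\mathcal{B}=\{B,B^c\}$. If $\mathcal{B}$ dilates $A$ under either Dempster's rule or the Geometric rule, then there exists a probability measure $P^*\ge\underline{P}$ such that $P^*(A\cap B)=P^*(A)P^*(B)$.
   Context: $\Omega$ is a separable, completely metrizable space with Borel $\sigma$-algebra $\mathscr{B}(\Omega)$; $\underline{P}$ is a Choquet capacity of order 2 on $\mathscr{B}(\Omega)$ (a coherent lower probability with weakly compact set of dominating measures satisfying $\underline{P}(A\cup B)\ge\underline{P}(A)+\underline{P}(B)-\underline{P}(A\cap B)$); $\Pi=\{P:P\ge\underline{P}\}$, $\underline{P}(A)=\inf_{P\in\Pi}P(A)$, $\overline{P}(A)=\sup_{P\in\Pi}P(A)=1-\underline{P}(A^c)$. Dempster's rule: $\overline{P}_{\mathfrak{D}}(A\mid Z)=\overline{P}(A\cap Z)/\overline{P}(Z)$, $\underline{P}_{\mathfrak{D}}(A\mid Z)=1-\overline{P}_{\mathfrak{D}}(A^c\mid Z)$. Geometric rule: $\underline{P}_{\mathfrak{G}}(A\mid Z)=\underline{P}(A\cap Z)/\underline{P}(Z)$, $\overline{P}_{\mathfrak{G}}(A\mid Z)=1-\underline{P}_{\mathfrak{G}}(A^c\mid Z)$. For a rule with conditional lower/upper probabilities $\underline{P}_\bullet,\overline{P}_\bullet$, $\mathcal{B}$ dilates $A$ if $\sup_{Z\in\mathcal{B}}\underline{P}_\bullet(A\mid Z)\le\underline{P}(A)\le\overline{P}(A)\le\inf_{Z\in\mathcal{B}}\overline{P}_\bullet(A\mid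 Z)$ with at least one of the two outer inequalities strict. *)

theory Defs
  imports "HOL-Probability.Probability"
begin

text \<open>Omega is a type of class polish_space (separable, complete metric space);
  events are the Borel sets, i.e. sets borel.  A lower probability is a
  function Pl on sets.\<close>

definition upper_prob :: "('a set \<Rightarrow> real) \<Rightarrow> 'a set \<Rightarrow> real" where
  "upper_prob Pl A = 1 - Pl (- A)"

definition core :: "('a::topological_space set \<Rightarrow> real) \<Rightarrow> 'a measure set" where
  "core Pl = {M. prob_space M \<and> sets M = sets borel \<and>
                 (\<forall>A \<in> sets borel. Pl A \<le> measure M A)}"

definition weak_conv_seq :: "(nat \<Rightarrow> 'a::topological_space measure) \<Rightarrow> 'a measure \<Rightarrow> bool" where
  "weak_conv_seq Ms M \<longleftrightarrow>
     (\<forall>f :: 'a \<Rightarrow> real. continuous_on UNIV f \<and> bounded (range f) \<longrightarrow>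
        (\<lambda>n. integral\<^sup>L (Ms n) f) \<longlonglongrightarrow> integral\<^sup>L M f)"

text \<open>Weak (sequential) compactness of a set of Borel probability measures;
  on a Polish space the weak topology is metrizable, so this is weak compactness.\<close>
definition weakly_seq_compact :: "'a::topological_space measure set \<Rightarrow> bool" where
  "weakly_seq_compact S \<longleftrightarrow>
     (\<forall>Ms. (\<forall>n. Ms n \<in> S) \<longrightarrow>
        (\<exists>(r::nat \<Rightarrow> nat) M. strict_mono r \<and> M \<in> S \<and> weak_conv_seq (Ms \<circ> r) M))"

definition choquet_capacity_2 :: "('a::topological_space set \<Rightarrow> real) \<Rightarrow> bool" where
  "choquet_capacity_2 Pl \<longleftrightarrow>
     core Pl \<noteq> {} \<and>
     (\<forall>A \<in> sets borel. Pl A = (INF M \<in> core Pl. measure M A)) \<and>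
     weakly_seq_compact (core Pl) \<and>
     (\<forall>A \<in> sets borel. \<forall>B \<in> sets borel. Pl (A \<union> B) \<ge> Pl A + Pl B - Pl (A \<inter> B))"

definition dempster_upper :: "('a set \<Rightarrow> real) \<Rightarrow> 'a set \<Rightarrow> 'a set \<Rightarrow> real" where
  "dempster_upper Pl A Z = upper_prob Pl (A \<inter> Z) / upper_prob Pl Z"

definition dempster_lower :: "('a set \<Rightarrow> real) \<Rightarrow> 'a set \<Rightarrow> 'a set \<Rightarrow> real" where
  "dempster_lower Pl A Z = 1 - dempster_upper Pl (- A) Z"

definition geometric_lower :: "('a set \<Rightarrow> real) \<Rightarrow> 'a set \<Rightarrow> 'a set \<Rightarrow> real" where
  "geometric_lower Pl A Z = Pl (A \<inter> Z) / Pl Z"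

definition geometric_upper :: "('a set \<Rightarrow> real) \<Rightarrow> 'a set \<Rightarrow> 'a set \<Rightarrow> real" where
  "geometric_upper Pl A Z = 1 - geometric_lower Pl (- A) Z"

definition dilates ::
  "('a set \<Rightarrow> real) \<Rightarrow> ('a set \<Rightarrow> 'a set \<Rightarrow> real) \<Rightarrow> ('a set \<Rightarrow> 'a set \<Rightarrow> real)
     \<Rightarrow> 'a set set \<Rightarrow> 'a set \<Rightarrow> bool" where
  "dilates Pl condL condU BB A \<longleftrightarrow>
     (SUP Z \<in> BB. condL A Z) \<le> Pl A \<and> Pl A \<le> upper_prob Pl A \<and>
     upper_prob Pl A \<le> (INF Z \<in> BB. condU A Z) \<and>
     ((SUP Z \<in> BB. condL A Z) < Pl A \<or> upper_prob Pl A < (INF Z \<in> BB. condU A Z))"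

end

theory Submission
  imports Defs
begin

lemma core_props:
  assumes "P \<in> core Pl"
  shows "prob_space P" "sets P = sets borel" "space P = UNIV"
    "\<And>X. X \<in> sets borel \<Longrightarrow> Pl X \<le> measure P X"
proof -
  show "sets P = sets borel" "prob_space P" using assms unfolding core_def by auto
  then show "space P = UNIV" using sets_eq_imp_space_eq[of P borel] by simp
  show "\<And>X. X \<in> sets borel \<Longrightarrow> Pl X \<le> measure P X" using assms unfolding core_def by auto
qed

lemma core_compl:
  assumes "P \<in> core Pl" "X \<in> sets borel"
  shows "measure P (- X) = 1 - measure P X"
proof -
  interpret prob_space P using core_props[OF assms(1)] by simp
  have "-X = space P - X" using core_props(3)[OF assms(1)] by (simp add: Compl_eq_Diff_UNIV)
  then show ?thesis using prob_compl[of X] core_props(2)[OF assms(1)] assms(2) by simp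
qed

lemma core_diff:
  assumes "P \<in> core Pl" "X \<in> sets borel" "Y \<in> sets borel"
  shows "measure P (X \<inter> - Y) = measure P X - measure P (X \<inter> Y)"
proof -
  interpret prob_space P using core_props[OF assms(1)] by simp
  have s: "X \<in> sets P" "X \<inter> Y \<in> sets P" using assms core_props(2)[OF assms(1)] by auto
  have "X \<inter> - Y = X - (X \<inter> Y)" by auto
  then show ?thesis using finite_measure_Diff[OF s] by auto
qed

definition cov :: "'a measure \<Rightarrow> 'a set \<Rightarrow> 'a set \<Rightarrow> real" where
  "cov P X Y = measure P (X \<inter> Y) - measure P X * measure P Y"

lemma cov_compl2:
  assumes "P \<in> core Pl" "X \<in> sets borel" "Y \<in> sets borel"
  shows "cov P X (- Y) = - cov P X Y"
  unfolding cov_def core_diff[OF assms] core_compl[OF assms(1,3)]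
  by (simp add: algebra_simps)

lemma cov_compl1:
  assumes "P \<in> core Pl" "X \<in> sets borel" "Y \<in> sets borel"
  shows "cov P (- X) Y = - cov P X Y"
  unfolding cov_def Int_commute[of "-X"] core_diff[OF assms(1,3,2)] core_compl[OF assms(1,2)]
  by (simp add: algebra_simps Int_commute)

lemma mixture:
  fixes P1 P2 :: "'a::topological_space measure"
  assumes "P1 \<in> core Pl" "P2 \<in> core Pl" "0 \<le> t" "t \<le> 1"
  shows "\<exists>M \<in> core Pl. \<forall>X \<in> sets borel. measure M X = t * measure P1 X + (1 - t) * measure P2 X"
proof -
  interpret p1: prob_space P1 using core_props[OF assms(1)] by simp
  interpret p2: prob_space P2 using core_props[OF assms(2)] by simp
  have s1: "sets P1 = sets borel" and s2: "sets P2 = sets borel"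
    using core_props assms by blast+
  define mu where "mu = (\<lambda>X. ennreal t * emeasure P1 X + ennreal (1 - t) * emeasure P2 X)"
  define M where "M = measure_of UNIV (sets borel) mu"
  have sa: "sigma_algebra (UNIV::'a set) (sets borel)"
    using sets.sigma_algebra_axioms[of "borel :: 'a measure"] by simp
  have pos: "positive (sets borel) mu" unfolding positive_def mu_def by simp
  have ca: "countably_additive (sets borel) mu"
    unfolding countably_additive_def
  proof (intro allI impI)
    fix F :: "nat \<Rightarrow> 'a set"
    assume h: "range F \<subseteq> sets borel" "disjoint_family F" "\<Union> (range F) \<in> sets borel"
    have e1: "(\<Sum>i. emeasure P1 (F i)) = emeasure P1 (\<Union>i. F i)"
      using h s1 by (intro suminf_emeasure) auto
    have e2: "(\<Sum>i. emeasure P2 (F i)) = emeasure P2 (\<Union>i. F i)"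
      using h s2 by (intro suminf_emeasure) auto
    have "(\<Sum>i. mu (F i)) = (\<Sum>i. ennreal t * emeasure P1 (F i)) + (\<Sum>i. ennreal (1 - t) * emeasure P2 (F i))"
      unfolding mu_def by (rule suminf_add[symmetric]) auto
    also have "\<dots> = mu (\<Union> (range F))"
      unfolding mu_def ennreal_suminf_cmult e1 e2 by simp
    finally show "(\<Sum>i. mu (F i)) = mu (\<Union> (range F))" .
  qed
  have em: "emeasure M X = mu X" if "X \<in> sets borel" for X
    unfolding M_def using emeasure_measure_of_sigma[OF sa pos ca that] .
  have sM: "sets M = sets borel" unfolding M_def using sigma_algebra.sigma_sets_eq[OF sa] by simp
  have spM: "space M = UNIV" unfolding M_def by simp
  have meas: "measure M X = t * measure P1 X + (1 - t) * measure P2 X" if "X \<in> sets borel" for X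
  proof -
    have "emeasure M X = ennreal (t * measure P1 X + (1 - t) * measure P2 X)"
      using em[OF that] assms(3,4) unfolding mu_def p1.emeasure_eq_measure p2.emeasure_eq_measure
      by (simp add: ennreal_mult ennreal_plus[symmetric])
    moreover have "0 \<le> t * measure P1 X + (1 - t) * measure P2 X" using assms(3,4) by simp
    ultimately show ?thesis unfolding measure_def[of M X] by simp
  qed
  have "prob_space M"
  proof
    have "emeasure M UNIV = mu UNIV" using em by simp
    also have "\<dots> = 1" unfolding mu_def
      using p1.emeasure_space_1 p2.emeasure_space_1 core_props(3)[OF assms(1)] core_props(3)[OF assms(2)] assms(3,4)
      by (simp add: ennreal_plus[symmetric])
    finally show "emeasure M (space M) = 1" using spM by simp
  qed
  moreover have "Pl X \<le> measure M X" if "X \<in> sets borel" for X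
  proof -
    have a: "Pl X \<le> measure P1 X" "Pl X \<le> measure P2 X"
      using core_props(4)[OF assms(1) that] core_props(4)[OF assms(2) that] by auto
    have "t * Pl X + (1 - t) * Pl X \<le> t * measure P1 X + (1 - t) * measure P2 X"
      using a assms(3,4) by (intro add_mono mult_left_mono) auto
    then show ?thesis using meas[OF that] by (simp add: algebra_simps)
  qed
  ultimately have "M \<in> core Pl" unfolding core_def using sM by auto
  then show ?thesis using meas by blast
qed


lemma ivt_core:
  fixes A B :: "'a::topological_space set"
  assumes "P1 \<in> core Pl" "P2 \<in> core Pl" "A \<in> sets borel" "B \<in> sets borel"
    "cov P1 A B \<le> 0" "0 \<le> cov P2 A B"
  shows "\<exists>P \<in> core Pl. cov P A B = 0"
proof -
  define g where "g = (\<lambda>t::real. (t * measure P1 (A \<inter> B) + (1 - t) * measure P2 (A \<inter> B))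
     - (t * measure P1 A + (1 - t) * measure P2 A) * (t * measure P1 B + (1 - t) * measure P2 B))"
  have "g 1 \<le> 0" "0 \<le> g 0" using assms(5,6) unfolding g_def cov_def by simp_all
  moreover have "continuous_on {0..1} g" unfolding g_def by (intro continuous_intros)
  ultimately obtain t where t: "0 \<le> t" "t \<le> 1" "g t = 0"
    using IVT2'[of g 1 0 0] by auto
  obtain M where M: "M \<in> core Pl"
    "\<forall>X \<in> sets borel. measure M X = t * measure P1 X + (1 - t) * measure P2 X"
    using mixture[OF assms(1,2) t(1,2)] by blast
  have "A \<inter> B \<in> sets borel" using assms(3,4) by auto
  then have "cov M A B = g t" unfolding cov_def g_def using M(2) assms(3,4) by simp
  then show ?thesis using M(1) t(3) by auto
qed

lemma both_signs:
  fixes A B :: "'a::topological_space set"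
  assumes "A \<in> sets borel" "B \<in> sets borel"
    "\<exists>P \<in> core Pl. cov P A B < 0" "\<exists>P \<in> core Pl. cov P A B > 0"
  shows "\<exists>P \<in> core Pl. measure P (A \<inter> B) = measure P A * measure P B"
proof -
  obtain P1 P2 where "P1 \<in> core Pl" "P2 \<in> core Pl" "cov P1 A B \<le> 0" "0 \<le> cov P2 A B"
    using assms(3,4) by (auto intro: less_imp_le)
  from ivt_core[OF this(1,2) assms(1,2) this(3,4)] show ?thesis unfolding cov_def by auto
qed

lemma pl_nonneg:
  assumes "choquet_capacity_2 Pl" "X \<in> sets borel"
  shows "0 \<le> Pl X"
proof -
  have "Pl X = (INF M \<in> core Pl. measure M X)" "core Pl \<noteq> {}"
    using assms unfolding choquet_capacity_2_def by auto
  then show ?thesis by (auto intro!: cINF_greatest)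
qed

lemma pl_less:
  assumes "choquet_capacity_2 Pl" "X \<in> sets borel" "Pl X < c"
  shows "\<exists>P \<in> core Pl. measure P X < c"
proof -
  have e: "Pl X = (INF M \<in> core Pl. measure M X)"
    using assms unfolding choquet_capacity_2_def by auto
  have "bdd_below ((\<lambda>M. measure M X) ` core Pl)"
    by (rule bdd_belowI[where m=0]) auto
  moreover have "core Pl \<noteq> {}" using assms(1) unfolding choquet_capacity_2_def by auto
  ultimately show ?thesis using assms(3) unfolding e by (simp add: cINF_less_iff)
qed

lemma core_le_upper:
  assumes "P \<in> core Pl" "X \<in> sets borel"
  shows "measure P X \<le> upper_prob Pl X"
proof -
  have "-X \<in> sets borel" using assms(2) by auto
  then have "Pl (-X) \<le> measure P (-X)" using core_props(4)[OF assms(1)] by blast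
  then show ?thesis unfolding upper_prob_def core_compl[OF assms] by simp
qed

lemma neg_cov:
  fixes X Y :: "'a::topological_space set"
  assumes "choquet_capacity_2 Pl" "X \<in> sets borel" "Y \<in> sets borel"
    "Pl (X \<inter> Y) < Pl X * Pl Y"
  shows "\<exists>P \<in> core Pl. cov P X Y < 0"
proof -
  have "X \<inter> Y \<in> sets borel" using assms by auto
  from pl_less[OF assms(1) this assms(4)] obtain P where P: "P \<in> core Pl"
    "measure P (X \<inter> Y) < Pl X * Pl Y" by auto
  have "Pl X * Pl Y \<le> measure P X * measure P Y"
    using core_props(4)[OF P(1)] assms(2,3) pl_nonneg[OF assms(1)]
    by (intro mult_mono) auto
  then show ?thesis using P unfolding cov_def by (intro bexI[of _ P]) auto
qed

lemma pos_cov: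
  fixes X Y :: "'a::topological_space set"
  assumes "choquet_capacity_2 Pl" "X \<in> sets borel" "Y \<in> sets borel"
    "upper_prob Pl X * upper_prob Pl Y < upper_prob Pl (X \<inter> Y)"
  shows "\<exists>P \<in> core Pl. cov P X Y > 0"
proof -
  have "- (X \<inter> Y) \<in> sets borel" using assms by auto
  moreover have "Pl (- (X \<inter> Y)) < 1 - upper_prob Pl X * upper_prob Pl Y"
    using assms(4) unfolding upper_prob_def[of Pl "X \<inter> Y"] by simp
  ultimately obtain P where P: "P \<in> core Pl"
    "measure P (- (X \<inter> Y)) < 1 - upper_prob Pl X * upper_prob Pl Y"
    using pl_less[OF assms(1)] by blast
  have XY: "X \<inter> Y \<in> sets borel" using assms by auto
  have gt: "upper_prob Pl X * upper_prob Pl Y < measure P (X \<inter> Y)"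
    using P(2) core_compl[OF P(1) XY] by simp
  have "measure P X * measure P Y \<le> upper_prob Pl X * upper_prob Pl Y"
    using core_le_upper[OF P(1)] assms(2,3) core_le_upper[OF P(1) assms(2)]
    by (intro mult_mono) (auto intro: order_trans[OF measure_nonneg])
  then show ?thesis using gt P(1) unfolding cov_def by (intro bexI[of _ P]) auto
qed


theorem corollary5p7:
  fixes Pl :: "'a::polish_space set \<Rightarrow> real" and A B :: "'a set"
  assumes "choquet_capacity_2 Pl"
    and "A \<in> sets borel" and "B \<in> sets borel"
    and "Pl B > 0" and "Pl (- B) > 0"
    and "dilates Pl (dempster_lower Pl) (dempster_upper Pl) {B, - B} A \<or>
         dilates Pl (geometric_lower Pl) (geometric_upper Pl) {B, - B} A"
  shows "\<exists>P \<in> core Pl. measure P (A \<inter> B) = measure P A * measure P B"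
proof -
  note cap = assms(1)
  have bA: "A \<in> sets borel" "- A \<in> sets borel" and bB: "B \<in> sets borel" "- B \<in> sets borel"
    using assms(2,3) by auto
  define U where "U = upper_prob Pl"
  obtain P0 where P0: "P0 \<in> core Pl" using cap unfolding choquet_capacity_2_def by auto
  have "Pl (- B) \<le> measure P0 (- B)" "Pl B \<le> measure P0 B"
    using core_props(4)[OF P0] bB by auto
  then have key: "Pl (- B) \<le> 1 - Pl B" using core_compl[OF P0 bB(1)] by simp
  have UB: "U B > 0" "U (- B) > 0" using key assms(4,5) unfolding U_def upper_prob_def by auto
  have LA: "Pl A = 1 - U (- A)" unfolding U_def upper_prob_def by simp
  have flip1: "\<exists>P \<in> core Pl. cov P A B < 0" if "\<exists>P \<in> core Pl. cov P (- A) B > 0"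
    using that cov_compl1[OF _ bA(1) bB(1)] by fastforce
  have flip2: "\<exists>P \<in> core Pl. cov P A B > 0" if "\<exists>P \<in> core Pl. cov P (- A) B < 0"
    using that cov_compl1[OF _ bA(1) bB(1)] by fastforce
  have flip3: "\<exists>P \<in> core Pl. cov P A B < 0" if "\<exists>P \<in> core Pl. cov P A (- B) > 0"
    using that cov_compl2[OF _ bA(1) bB(1)] by fastforce
  have flip4: "\<exists>P \<in> core Pl. cov P A B > 0" if "\<exists>P \<in> core Pl. cov P A (- B) < 0"
    using that cov_compl2[OF _ bA(1) bB(1)] by fastforce
  have flip5: "\<exists>P \<in> core Pl. cov P A B < 0" if "\<exists>P \<in> core Pl. cov P (- A) (- B) < 0"
    using that cov_compl2[OF _ bA(2) bB(1)] cov_compl1[OF _ bA(1) bB(1)] by fastforce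
  have flip6: "\<exists>P \<in> core Pl. cov P A B > 0" if "\<exists>P \<in> core Pl. cov P (- A) (- B) > 0"
    using that cov_compl2[OF _ bA(2) bB(1)] cov_compl1[OF _ bA(1) bB(1)] by fastforce
  have sup2: "(SUP Z \<in> {B, - B}. f Z) = max (f B) (f (- B))" for f :: "'a set \<Rightarrow> real"
    by (simp add: cSup_insert sup_max)
  have inf2: "(INF Z \<in> {B, - B}. f Z) = min (f B) (f (- B))" for f :: "'a set \<Rightarrow> real"
    by (simp add: cInf_insert inf_min)
  show ?thesis
    using assms(6)
  proof
    assume d: "dilates Pl (dempster_lower Pl) (dempster_upper Pl) {B, - B} A"
    then have "(dempster_lower Pl A B < Pl A \<and> dempster_lower Pl A (- B) < Pl A) \<or>
      (U A < dempster_upper Pl A B \<and> U A < dempster_upper Pl A (- B))"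
      unfolding dilates_def sup2 inf2 U_def by auto
    then show ?thesis
    proof
      assume h: "dempster_lower Pl A B < Pl A \<and> dempster_lower Pl A (- B) < Pl A"
      have "U (- A) < U (- A \<inter> B) / U B" "U (- A) < U (- A \<inter> - B) / U (- B)"
        using h unfolding dempster_lower_def dempster_upper_def LA U_def[symmetric] by auto
      then have "U (- A) * U B < U (- A \<inter> B)" "U (- A) * U (- B) < U (- A \<inter> - B)"
        using UB by (simp_all add: pos_less_divide_eq)
      then have "\<exists>P \<in> core Pl. cov P (- A) B > 0" "\<exists>P \<in> core Pl. cov P (- A) (- B) > 0"
        using pos_cov[OF cap bA(2) bB(1)] pos_cov[OF cap bA(2) bB(2)] unfolding U_def by auto
      then show ?thesis using both_signs[OF bA(1) bB(1)] flip1 flip6 by blast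
    next
      assume h: "U A < dempster_upper Pl A B \<and> U A < dempster_upper Pl A (- B)"
      have "U A < U (A \<inter> B) / U B" "U A < U (A \<inter> - B) / U (- B)"
        using h unfolding dempster_upper_def U_def by auto
      then have "U A * U B < U (A \<inter> B)" "U A * U (- B) < U (A \<inter> - B)"
        using UB by (simp_all add: pos_less_divide_eq)
      then have "\<exists>P \<in> core Pl. cov P A B > 0" "\<exists>P \<in> core Pl. cov P A (- B) > 0"
        using pos_cov[OF cap bA(1) bB(1)] pos_cov[OF cap bA(1) bB(2)] unfolding U_def by auto
      then show ?thesis using both_signs[OF bA(1) bB(1)] flip3 by blast
    qed
  next
    assume d: "dilates Pl (geometric_lower Pl) (geometric_upper Pl) {B, - B} A"
    then have "(geometric_lower Pl A B < Pl A \<and> geometric_lower Pl A (- B) < Pl A) \<or>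
      (U A < geometric_upper Pl A B \<and> U A < geometric_upper Pl A (- B))"
      unfolding dilates_def sup2 inf2 U_def by auto
    then show ?thesis
    proof
      assume h: "geometric_lower Pl A B < Pl A \<and> geometric_lower Pl A (- B) < Pl A"
      have "Pl (A \<inter> B) / Pl B < Pl A" "Pl (A \<inter> - B) / Pl (- B) < Pl A"
        using h unfolding geometric_lower_def by auto
      then have "Pl (A \<inter> B) < Pl A * Pl B" "Pl (A \<inter> - B) < Pl A * Pl (- B)"
        using assms(4,5) by (simp_all add: pos_divide_less_eq)
      then have "\<exists>P \<in> core Pl. cov P A B < 0" "\<exists>P \<in> core Pl. cov P A (- B) < 0"
        using neg_cov[OF cap bA(1) bB(1)] neg_cov[OF cap bA(1) bB(2)] by auto
      then show ?thesis using both_signs[OF bA(1) bB(1)] flip4 by blast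
    next
      assume h: "U A < geometric_upper Pl A B \<and> U A < geometric_upper Pl A (- B)"
      have "Pl (- A \<inter> B) / Pl B < Pl (- A)" "Pl (- A \<inter> - B) / Pl (- B) < Pl (- A)"
        using h unfolding geometric_upper_def geometric_lower_def U_def upper_prob_def by auto
      then have "Pl (- A \<inter> B) < Pl (- A) * Pl B" "Pl (- A \<inter> - B) < Pl (- A) * Pl (- B)"
        using assms(4,5) by (simp_all add: pos_divide_less_eq)
      then have "\<exists>P \<in> core Pl. cov P (- A) B < 0" "\<exists>P \<in> core Pl. cov P (- A) (- B) < 0"
        using neg_cov[OF cap bA(2) bB(1)] neg_cov[OF cap bA(2) bB(2)] by auto
      then show ?thesis using both_signs[OF bA(1) bB(1)] flip2 flip5 by blast
    qed
  qed
qed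

end
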